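(* Let $N$ be a nontrivial normal subgroup of $G_2$. If $\phi(N)\simeq A_8$, then $N=L$, where $L$ is the set of elements of $G_2$ expressible as a word of even length in the generators $u,d,f,b,l,r$ and their inverses.
   Context: The $2\times2\times2$ Rubik's cube consists of 8 corner cubelets, each carrying 3 colored stickers. Corner positions are numbered 1 = top-front-left, 2 = top-front-right, 3 = top-back-left, 4 = top-back-right, 5 = bottom-front-left, 6 = bottom-front-right, 7 = bottom-back-left, 8 = bottom-back-right. $G_2$ is the subgroup of the symmetric group on the 24 stickers generated by the six moves $u,d,f,b,l,r$ rotating respectively the top, bottom, front, back, left, right layer of four cubelets by $90^\circ$ clockwise as seen from outside facing that face. $\phi:G_2\to S_8$ records the permutation of corner positions. *)

theory Defs
  imports "HOL-Algebra.Algebra"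
begin

text \<open>Coordinates: x = +1 right / -1 left,
  y = +1 back / -1 front, z = +1 top / -1 bottom. A corner position is a vector
  in {-1,1}^3; a sticker is a pair (p, m) of a corner position p and the outward
  unit normal m of the face it lies on.\<close>

type_synonym vec3 = "int \<times> int \<times> int"
type_synonym sticker = "vec3 \<times> vec3"

definition dot3 :: "vec3 \<Rightarrow> vec3 \<Rightarrow> int" where
  "dot3 a b = (case a of (a1,a2,a3) \<Rightarrow> case b of (b1,b2,b3) \<Rightarrow> a1*b1 + a2*b2 + a3*b3)"

definition cross3 :: "vec3 \<Rightarrow> vec3 \<Rightarrow> vec3" where
  "cross3 a b = (case a of (a1,a2,a3) \<Rightarrow> case b of (b1,b2,b3) \<Rightarrow>
      (a2*b3 - a3*b2, a3*b1 - a1*b3, a1*b2 - a2*b1))"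

definition scal3 :: "int \<Rightarrow> vec3 \<Rightarrow> vec3" where
  "scal3 c a = (case a of (a1,a2,a3) \<Rightarrow> (c*a1, c*a2, c*a3))"

definition sub3 :: "vec3 \<Rightarrow> vec3 \<Rightarrow> vec3" where
  "sub3 a b = (case a of (a1,a2,a3) \<Rightarrow> case b of (b1,b2,b3) \<Rightarrow> (a1-b1, a2-b2, a3-b3))"

text \<open>Rotation by 90 degrees clockwise as seen from outside, looking at the face
  with outward unit normal n (i.e. rotation by -90 degrees about n):
  v \<mapsto> (n.v) n - n \<times> v.\<close>
definition rot_cw :: "vec3 \<Rightarrow> vec3 \<Rightarrow> vec3" where
  "rot_cw n v = sub3 (scal3 (dot3 n v) n) (cross3 n v)"

definition corners :: "vec3 set" where
  "corners = {(x,y,z). x \<in> {-1,1} \<and> y \<in> {-1,1} \<and> z \<in> {-1,1}}"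

definition stickers :: "sticker set" where
  "stickers = {(p,m). p \<in> corners \<and>
      (case p of (x,y,z) \<Rightarrow> m \<in> {(x,0,0), (0,y,0), (0,0,z)})}"

definition face_move :: "vec3 \<Rightarrow> sticker \<Rightarrow> sticker" where
  "face_move n = restrict (\<lambda>(p,m). if dot3 p n = 1 then (rot_cw n p, rot_cw n m) else (p,m)) stickers"

definition mv_u :: "sticker \<Rightarrow> sticker" where "mv_u = face_move (0,0,1)"
definition mv_d :: "sticker \<Rightarrow> sticker" where "mv_d = face_move (0,0,-1)"
definition mv_f :: "sticker \<Rightarrow> sticker" where "mv_f = face_move (0,-1,0)"
definition mv_b :: "sticker \<Rightarrow> sticker" where "mv_b = face_move (0,1,0)"
definition mv_l :: "sticker \<Rightarrow> sticker" where "mv_l = face_move (-1,0,0)"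
definition mv_r :: "sticker \<Rightarrow> sticker" where "mv_r = face_move (1,0,0)"

definition cube_moves :: "(sticker \<Rightarrow> sticker) set" where
  "cube_moves = {mv_u, mv_d, mv_f, mv_b, mv_l, mv_r}"

abbreviation SymSt :: "(sticker \<Rightarrow> sticker) monoid" where
  "SymSt \<equiv> BijGroup stickers"

definition G2_set :: "(sticker \<Rightarrow> sticker) set" where
  "G2_set = generate SymSt cube_moves"

definition G2 :: "(sticker \<Rightarrow> sticker) monoid" where
  "G2 = SymSt \<lparr>carrier := G2_set\<rparr>"

text \<open>Corner numbering: 1 TFL, 2 TFR, 3 TBL, 4 TBR, 5 BFL, 6 BFR, 7 BBL, 8 BBR.\<close>
definition corner_index :: "vec3 \<Rightarrow> nat" where
  "corner_index p = (case p of (x,y,z) \<Rightarrow>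
      1 + (if x = 1 then 1 else 0) + (if y = 1 then 2 else 0) + (if z = -1 then 4 else 0))"

definition corner_pos :: "nat \<Rightarrow> vec3" where
  "corner_pos i = (THE p. p \<in> corners \<and> corner_index p = i)"

text \<open>phi: G_2 \<rightarrow> S_8, the permutation of corner positions: the cubelet at position i
  (tracked via its sticker with vertical normal) is sent to position phi g i.\<close>
definition phi :: "(sticker \<Rightarrow> sticker) \<Rightarrow> nat \<Rightarrow> nat" where
  "phi g = (\<lambda>i. if i \<in> {1..8} then
       corner_index (fst (g (corner_pos i, (0, 0, snd (snd (corner_pos i))))))
     else i)"

definition word_eval :: "(sticker \<Rightarrow> sticker) list \<Rightarrow> (sticker \<Rightarrow> sticker)" where
  "word_eval w = foldr (\<lambda>a b. a \<otimes>\<^bsub>SymSt\<^esub> b) w \<one>\<^bsub>SymSt\<^esub>"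

definition L_set :: "(sticker \<Rightarrow> sticker) set" where
  "L_set = {word_eval w | w. set w \<subseteq> cube_moves \<union> (\<lambda>g. inv\<^bsub>SymSt\<^esub> g) ` cube_moves
                            \<and> even (length w)}"

end

theory Submission
  imports Defs
begin

lemma mem_st: "((x,y,z),m) \<in> stickers \<longleftrightarrow> x \<in> {-1,1} \<and> y \<in> {-1,1} \<and> z \<in> {-1,1} \<and> m \<in> {(x,0,0),(0,y,0),(0,0,z)}"
  unfolding stickers_def corners_def by auto
lemma fm: "face_move n ((x,y,z),m) = (if ((x,y,z),m) \<in> stickers then (if dot3 (x,y,z) n = 1 then (rot_cw n (x,y,z), rot_cw n m) else ((x,y,z),m)) else undefined)"
  unfolding face_move_def by simp
lemma rc: "rot_cw (a,b,e) (x,y,z) = ((a*x+b*y+e*z)*a - (b*z-e*y), (a*x+b*y+e*z)*b - (e*x - a*z), (a*x+b*y+e*z)*e - (a*y-b*x))"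
  by (simp add: rot_cw_def dot3_def cross3_def scal3_def sub3_def)
lemma d3: "dot3 (a,b,e) (x,y,z) = a*x+b*y+e*z" by (simp add: dot3_def)
definition tau :: "sticker \<Rightarrow> sticker" where
  "tau s = (case s of ((x,y,z),(m1,m2,m3)) \<Rightarrow>
     if x*y*z = 1 then ((x,y,z),(x*z*m3, y*x*m1, z*y*m2))
     else ((x,y,z),(x*y*m2, y*z*m3, z*x*m1)))"
lemma tab_u [simp]:
  "mv_u (((-1),(-1),(-1)),((-1),0,0)) = (((-1),(-1),(-1)),((-1),0,0))"
  "mv_u (((-1),(-1),(-1)),(0,(-1),0)) = (((-1),(-1),(-1)),(0,(-1),0))"
  "mv_u (((-1),(-1),(-1)),(0,0,(-1))) = (((-1),(-1),(-1)),(0,0,(-1)))"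
  "mv_u (((-1),(-1),1),((-1),0,0)) = (((-1),1,1),(0,1,0))"
  "mv_u (((-1),(-1),1),(0,(-1),0)) = (((-1),1,1),((-1),0,0))"
  "mv_u (((-1),(-1),1),(0,0,1)) = (((-1),1,1),(0,0,1))"
  "mv_u (((-1),1,(-1)),((-1),0,0)) = (((-1),1,(-1)),((-1),0,0))"
  "mv_u (((-1),1,(-1)),(0,1,0)) = (((-1),1,(-1)),(0,1,0))"
  "mv_u (((-1),1,(-1)),(0,0,(-1))) = (((-1),1,(-1)),(0,0,(-1)))"
  "mv_u (((-1),1,1),((-1),0,0)) = ((1,1,1),(0,1,0))"
  "mv_u (((-1),1,1),(0,1,0)) = ((1,1,1),(1,0,0))"
  "mv_u (((-1),1,1),(0,0,1)) = ((1,1,1),(0,0,1))"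
  "mv_u ((1,(-1),(-1)),(1,0,0)) = ((1,(-1),(-1)),(1,0,0))"
  "mv_u ((1,(-1),(-1)),(0,(-1),0)) = ((1,(-1),(-1)),(0,(-1),0))"
  "mv_u ((1,(-1),(-1)),(0,0,(-1))) = ((1,(-1),(-1)),(0,0,(-1)))"
  "mv_u ((1,(-1),1),(1,0,0)) = (((-1),(-1),1),(0,(-1),0))"
  "mv_u ((1,(-1),1),(0,(-1),0)) = (((-1),(-1),1),((-1),0,0))"
  "mv_u ((1,(-1),1),(0,0,1)) = (((-1),(-1),1),(0,0,1))"
  "mv_u ((1,1,(-1)),(1,0,0)) = ((1,1,(-1)),(1,0,0))"
  "mv_u ((1,1,(-1)),(0,1,0)) = ((1,1,(-1)),(0,1,0))"
  "mv_u ((1,1,(-1)),(0,0,(-1))) = ((1,1,(-1)),(0,0,(-1)))"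
  "mv_u ((1,1,1),(1,0,0)) = ((1,(-1),1),(0,(-1),0))"
  "mv_u ((1,1,1),(0,1,0)) = ((1,(-1),1),(1,0,0))"
  "mv_u ((1,1,1),(0,0,1)) = ((1,(-1),1),(0,0,1))"
  by (simp_all add: mv_u_def fm mem_st rc d3)

lemma tab_d [simp]:
  "mv_d (((-1),(-1),(-1)),((-1),0,0)) = ((1,(-1),(-1)),(0,(-1),0))"
  "mv_d (((-1),(-1),(-1)),(0,(-1),0)) = ((1,(-1),(-1)),(1,0,0))"
  "mv_d (((-1),(-1),(-1)),(0,0,(-1))) = ((1,(-1),(-1)),(0,0,(-1)))"
  "mv_d (((-1),(-1),1),((-1),0,0)) = (((-1),(-1),1),((-1),0,0))"
  "mv_d (((-1),(-1),1),(0,(-1),0)) = (((-1),(-1),1),(0,(-1),0))"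
  "mv_d (((-1),(-1),1),(0,0,1)) = (((-1),(-1),1),(0,0,1))"
  "mv_d (((-1),1,(-1)),((-1),0,0)) = (((-1),(-1),(-1)),(0,(-1),0))"
  "mv_d (((-1),1,(-1)),(0,1,0)) = (((-1),(-1),(-1)),((-1),0,0))"
  "mv_d (((-1),1,(-1)),(0,0,(-1))) = (((-1),(-1),(-1)),(0,0,(-1)))"
  "mv_d (((-1),1,1),((-1),0,0)) = (((-1),1,1),((-1),0,0))"
  "mv_d (((-1),1,1),(0,1,0)) = (((-1),1,1),(0,1,0))"
  "mv_d (((-1),1,1),(0,0,1)) = (((-1),1,1),(0,0,1))"
  "mv_d ((1,(-1),(-1)),(1,0,0)) = ((1,1,(-1)),(0,1,0))"
  "mv_d ((1,(-1),(-1)),(0,(-1),0)) = ((1,1,(-1)),(1,0,0))"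
  "mv_d ((1,(-1),(-1)),(0,0,(-1))) = ((1,1,(-1)),(0,0,(-1)))"
  "mv_d ((1,(-1),1),(1,0,0)) = ((1,(-1),1),(1,0,0))"
  "mv_d ((1,(-1),1),(0,(-1),0)) = ((1,(-1),1),(0,(-1),0))"
  "mv_d ((1,(-1),1),(0,0,1)) = ((1,(-1),1),(0,0,1))"
  "mv_d ((1,1,(-1)),(1,0,0)) = (((-1),1,(-1)),(0,1,0))"
  "mv_d ((1,1,(-1)),(0,1,0)) = (((-1),1,(-1)),((-1),0,0))"
  "mv_d ((1,1,(-1)),(0,0,(-1))) = (((-1),1,(-1)),(0,0,(-1)))"
  "mv_d ((1,1,1),(1,0,0)) = ((1,1,1),(1,0,0))"
  "mv_d ((1,1,1),(0,1,0)) = ((1,1,1),(0,1,0))"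
  "mv_d ((1,1,1),(0,0,1)) = ((1,1,1),(0,0,1))"
  by (simp_all add: mv_d_def fm mem_st rc d3)

lemma tab_f [simp]:
  "mv_f (((-1),(-1),(-1)),((-1),0,0)) = (((-1),(-1),1),(0,0,1))"
  "mv_f (((-1),(-1),(-1)),(0,(-1),0)) = (((-1),(-1),1),(0,(-1),0))"
  "mv_f (((-1),(-1),(-1)),(0,0,(-1))) = (((-1),(-1),1),((-1),0,0))"
  "mv_f (((-1),(-1),1),((-1),0,0)) = ((1,(-1),1),(0,0,1))"
  "mv_f (((-1),(-1),1),(0,(-1),0)) = ((1,(-1),1),(0,(-1),0))"
  "mv_f (((-1),(-1),1),(0,0,1)) = ((1,(-1),1),(1,0,0))"
  "mv_f (((-1),1,(-1)),((-1),0,0)) = (((-1),1,(-1)),((-1),0,0))"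
  "mv_f (((-1),1,(-1)),(0,1,0)) = (((-1),1,(-1)),(0,1,0))"
  "mv_f (((-1),1,(-1)),(0,0,(-1))) = (((-1),1,(-1)),(0,0,(-1)))"
  "mv_f (((-1),1,1),((-1),0,0)) = (((-1),1,1),((-1),0,0))"
  "mv_f (((-1),1,1),(0,1,0)) = (((-1),1,1),(0,1,0))"
  "mv_f (((-1),1,1),(0,0,1)) = (((-1),1,1),(0,0,1))"
  "mv_f ((1,(-1),(-1)),(1,0,0)) = (((-1),(-1),(-1)),(0,0,(-1)))"
  "mv_f ((1,(-1),(-1)),(0,(-1),0)) = (((-1),(-1),(-1)),(0,(-1),0))"
  "mv_f ((1,(-1),(-1)),(0,0,(-1))) = (((-1),(-1),(-1)),((-1),0,0))"
  "mv_f ((1,(-1),1),(1,0,0)) = ((1,(-1),(-1)),(0,0,(-1)))"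
  "mv_f ((1,(-1),1),(0,(-1),0)) = ((1,(-1),(-1)),(0,(-1),0))"
  "mv_f ((1,(-1),1),(0,0,1)) = ((1,(-1),(-1)),(1,0,0))"
  "mv_f ((1,1,(-1)),(1,0,0)) = ((1,1,(-1)),(1,0,0))"
  "mv_f ((1,1,(-1)),(0,1,0)) = ((1,1,(-1)),(0,1,0))"
  "mv_f ((1,1,(-1)),(0,0,(-1))) = ((1,1,(-1)),(0,0,(-1)))"
  "mv_f ((1,1,1),(1,0,0)) = ((1,1,1),(1,0,0))"
  "mv_f ((1,1,1),(0,1,0)) = ((1,1,1),(0,1,0))"
  "mv_f ((1,1,1),(0,0,1)) = ((1,1,1),(0,0,1))"
  by (simp_all add: mv_f_def fm mem_st rc d3)

lemma tab_b [simp]: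
  "mv_b (((-1),(-1),(-1)),((-1),0,0)) = (((-1),(-1),(-1)),((-1),0,0))"
  "mv_b (((-1),(-1),(-1)),(0,(-1),0)) = (((-1),(-1),(-1)),(0,(-1),0))"
  "mv_b (((-1),(-1),(-1)),(0,0,(-1))) = (((-1),(-1),(-1)),(0,0,(-1)))"
  "mv_b (((-1),(-1),1),((-1),0,0)) = (((-1),(-1),1),((-1),0,0))"
  "mv_b (((-1),(-1),1),(0,(-1),0)) = (((-1),(-1),1),(0,(-1),0))"
  "mv_b (((-1),(-1),1),(0,0,1)) = (((-1),(-1),1),(0,0,1))"
  "mv_b (((-1),1,(-1)),((-1),0,0)) = ((1,1,(-1)),(0,0,(-1)))"
  "mv_b (((-1),1,(-1)),(0,1,0)) = ((1,1,(-1)),(0,1,0))"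
  "mv_b (((-1),1,(-1)),(0,0,(-1))) = ((1,1,(-1)),(1,0,0))"
  "mv_b (((-1),1,1),((-1),0,0)) = (((-1),1,(-1)),(0,0,(-1)))"
  "mv_b (((-1),1,1),(0,1,0)) = (((-1),1,(-1)),(0,1,0))"
  "mv_b (((-1),1,1),(0,0,1)) = (((-1),1,(-1)),((-1),0,0))"
  "mv_b ((1,(-1),(-1)),(1,0,0)) = ((1,(-1),(-1)),(1,0,0))"
  "mv_b ((1,(-1),(-1)),(0,(-1),0)) = ((1,(-1),(-1)),(0,(-1),0))"
  "mv_b ((1,(-1),(-1)),(0,0,(-1))) = ((1,(-1),(-1)),(0,0,(-1)))"
  "mv_b ((1,(-1),1),(1,0,0)) = ((1,(-1),1),(1,0,0))"
  "mv_b ((1,(-1),1),(0,(-1),0)) = ((1,(-1),1),(0,(-1),0))"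
  "mv_b ((1,(-1),1),(0,0,1)) = ((1,(-1),1),(0,0,1))"
  "mv_b ((1,1,(-1)),(1,0,0)) = ((1,1,1),(0,0,1))"
  "mv_b ((1,1,(-1)),(0,1,0)) = ((1,1,1),(0,1,0))"
  "mv_b ((1,1,(-1)),(0,0,(-1))) = ((1,1,1),(1,0,0))"
  "mv_b ((1,1,1),(1,0,0)) = (((-1),1,1),(0,0,1))"
  "mv_b ((1,1,1),(0,1,0)) = (((-1),1,1),(0,1,0))"
  "mv_b ((1,1,1),(0,0,1)) = (((-1),1,1),((-1),0,0))"
  by (simp_all add: mv_b_def fm mem_st rc d3)

lemma tab_l [simp]:
  "mv_l (((-1),(-1),(-1)),((-1),0,0)) = (((-1),1,(-1)),((-1),0,0))"
  "mv_l (((-1),(-1),(-1)),(0,(-1),0)) = (((-1),1,(-1)),(0,0,(-1)))"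
  "mv_l (((-1),(-1),(-1)),(0,0,(-1))) = (((-1),1,(-1)),(0,1,0))"
  "mv_l (((-1),(-1),1),((-1),0,0)) = (((-1),(-1),(-1)),((-1),0,0))"
  "mv_l (((-1),(-1),1),(0,(-1),0)) = (((-1),(-1),(-1)),(0,0,(-1)))"
  "mv_l (((-1),(-1),1),(0,0,1)) = (((-1),(-1),(-1)),(0,(-1),0))"
  "mv_l (((-1),1,(-1)),((-1),0,0)) = (((-1),1,1),((-1),0,0))"
  "mv_l (((-1),1,(-1)),(0,1,0)) = (((-1),1,1),(0,0,1))"
  "mv_l (((-1),1,(-1)),(0,0,(-1))) = (((-1),1,1),(0,1,0))"
  "mv_l (((-1),1,1),((-1),0,0)) = (((-1),(-1),1),((-1),0,0))"
  "mv_l (((-1),1,1),(0,1,0)) = (((-1),(-1),1),(0,0,1))"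
  "mv_l (((-1),1,1),(0,0,1)) = (((-1),(-1),1),(0,(-1),0))"
  "mv_l ((1,(-1),(-1)),(1,0,0)) = ((1,(-1),(-1)),(1,0,0))"
  "mv_l ((1,(-1),(-1)),(0,(-1),0)) = ((1,(-1),(-1)),(0,(-1),0))"
  "mv_l ((1,(-1),(-1)),(0,0,(-1))) = ((1,(-1),(-1)),(0,0,(-1)))"
  "mv_l ((1,(-1),1),(1,0,0)) = ((1,(-1),1),(1,0,0))"
  "mv_l ((1,(-1),1),(0,(-1),0)) = ((1,(-1),1),(0,(-1),0))"
  "mv_l ((1,(-1),1),(0,0,1)) = ((1,(-1),1),(0,0,1))"
  "mv_l ((1,1,(-1)),(1,0,0)) = ((1,1,(-1)),(1,0,0))"
  "mv_l ((1,1,(-1)),(0,1,0)) = ((1,1,(-1)),(0,1,0))"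
  "mv_l ((1,1,(-1)),(0,0,(-1))) = ((1,1,(-1)),(0,0,(-1)))"
  "mv_l ((1,1,1),(1,0,0)) = ((1,1,1),(1,0,0))"
  "mv_l ((1,1,1),(0,1,0)) = ((1,1,1),(0,1,0))"
  "mv_l ((1,1,1),(0,0,1)) = ((1,1,1),(0,0,1))"
  by (simp_all add: mv_l_def fm mem_st rc d3)

lemma tab_r [simp]:
  "mv_r (((-1),(-1),(-1)),((-1),0,0)) = (((-1),(-1),(-1)),((-1),0,0))"
  "mv_r (((-1),(-1),(-1)),(0,(-1),0)) = (((-1),(-1),(-1)),(0,(-1),0))"
  "mv_r (((-1),(-1),(-1)),(0,0,(-1))) = (((-1),(-1),(-1)),(0,0,(-1)))"
  "mv_r (((-1),(-1),1),((-1),0,0)) = (((-1),(-1),1),((-1),0,0))"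
  "mv_r (((-1),(-1),1),(0,(-1),0)) = (((-1),(-1),1),(0,(-1),0))"
  "mv_r (((-1),(-1),1),(0,0,1)) = (((-1),(-1),1),(0,0,1))"
  "mv_r (((-1),1,(-1)),((-1),0,0)) = (((-1),1,(-1)),((-1),0,0))"
  "mv_r (((-1),1,(-1)),(0,1,0)) = (((-1),1,(-1)),(0,1,0))"
  "mv_r (((-1),1,(-1)),(0,0,(-1))) = (((-1),1,(-1)),(0,0,(-1)))"
  "mv_r (((-1),1,1),((-1),0,0)) = (((-1),1,1),((-1),0,0))"
  "mv_r (((-1),1,1),(0,1,0)) = (((-1),1,1),(0,1,0))"
  "mv_r (((-1),1,1),(0,0,1)) = (((-1),1,1),(0,0,1))"
  "mv_r ((1,(-1),(-1)),(1,0,0)) = ((1,(-1),1),(1,0,0))"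
  "mv_r ((1,(-1),(-1)),(0,(-1),0)) = ((1,(-1),1),(0,0,1))"
  "mv_r ((1,(-1),(-1)),(0,0,(-1))) = ((1,(-1),1),(0,(-1),0))"
  "mv_r ((1,(-1),1),(1,0,0)) = ((1,1,1),(1,0,0))"
  "mv_r ((1,(-1),1),(0,(-1),0)) = ((1,1,1),(0,0,1))"
  "mv_r ((1,(-1),1),(0,0,1)) = ((1,1,1),(0,1,0))"
  "mv_r ((1,1,(-1)),(1,0,0)) = ((1,(-1),(-1)),(1,0,0))"
  "mv_r ((1,1,(-1)),(0,1,0)) = ((1,(-1),(-1)),(0,0,(-1)))"
  "mv_r ((1,1,(-1)),(0,0,(-1))) = ((1,(-1),(-1)),(0,(-1),0))"
  "mv_r ((1,1,1),(1,0,0)) = ((1,1,(-1)),(1,0,0))"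
  "mv_r ((1,1,1),(0,1,0)) = ((1,1,(-1)),(0,0,(-1)))"
  "mv_r ((1,1,1),(0,0,1)) = ((1,1,(-1)),(0,1,0))"
  by (simp_all add: mv_r_def fm mem_st rc d3)

lemma tab_tau [simp]:
  "tau (((-1),(-1),(-1)),((-1),0,0)) = (((-1),(-1),(-1)),(0,0,(-1)))"
  "tau (((-1),(-1),(-1)),(0,(-1),0)) = (((-1),(-1),(-1)),((-1),0,0))"
  "tau (((-1),(-1),(-1)),(0,0,(-1))) = (((-1),(-1),(-1)),(0,(-1),0))"
  "tau (((-1),(-1),1),((-1),0,0)) = (((-1),(-1),1),(0,(-1),0))"
  "tau (((-1),(-1),1),(0,(-1),0)) = (((-1),(-1),1),(0,0,1))"
  "tau (((-1),(-1),1),(0,0,1)) = (((-1),(-1),1),((-1),0,0))"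
  "tau (((-1),1,(-1)),((-1),0,0)) = (((-1),1,(-1)),(0,1,0))"
  "tau (((-1),1,(-1)),(0,1,0)) = (((-1),1,(-1)),(0,0,(-1)))"
  "tau (((-1),1,(-1)),(0,0,(-1))) = (((-1),1,(-1)),((-1),0,0))"
  "tau (((-1),1,1),((-1),0,0)) = (((-1),1,1),(0,0,1))"
  "tau (((-1),1,1),(0,1,0)) = (((-1),1,1),((-1),0,0))"
  "tau (((-1),1,1),(0,0,1)) = (((-1),1,1),(0,1,0))"
  "tau ((1,(-1),(-1)),(1,0,0)) = ((1,(-1),(-1)),(0,(-1),0))"
  "tau ((1,(-1),(-1)),(0,(-1),0)) = ((1,(-1),(-1)),(0,0,(-1)))"
  "tau ((1,(-1),(-1)),(0,0,(-1))) = ((1,(-1),(-1)),(1,0,0))"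
  "tau ((1,(-1),1),(1,0,0)) = ((1,(-1),1),(0,0,1))"
  "tau ((1,(-1),1),(0,(-1),0)) = ((1,(-1),1),(1,0,0))"
  "tau ((1,(-1),1),(0,0,1)) = ((1,(-1),1),(0,(-1),0))"
  "tau ((1,1,(-1)),(1,0,0)) = ((1,1,(-1)),(0,0,(-1)))"
  "tau ((1,1,(-1)),(0,1,0)) = ((1,1,(-1)),(1,0,0))"
  "tau ((1,1,(-1)),(0,0,(-1))) = ((1,1,(-1)),(0,1,0))"
  "tau ((1,1,1),(1,0,0)) = ((1,1,1),(0,1,0))"
  "tau ((1,1,1),(0,1,0)) = ((1,1,1),(0,0,1))"
  "tau ((1,1,1),(0,0,1)) = ((1,1,1),(1,0,0))"
  by (simp_all add: tau_def)

lemma ball_st0: "(\<forall>s\<in>stickers. P s) \<longleftrightarrow> (\<forall>x\<in>{-1,1}. \<forall>y\<in>{-1,1}. \<forall>z\<in>{-1,1}. \<forall>m\<in>{(x,0,0),(0,y,0),(0,0,z)}. P ((x,y,z),m))"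
  unfolding stickers_def corners_def by fastforce
lemma ball_co0: "(\<forall>p\<in>corners. P p) \<longleftrightarrow> (\<forall>x\<in>{-1,1}. \<forall>y\<in>{-1,1}. \<forall>z\<in>{-1,1}. P (x,y,z))"
  unfolding corners_def by fastforce
lemmas ball_st = ball_st0[simplified ball_simps simp_thms]
lemmas ball_co = ball_co0[simplified ball_simps simp_thms]

definition vst :: "vec3 \<Rightarrow> sticker" where "vst p = (p, (0, 0, snd (snd p)))"

definition wt :: "sticker \<Rightarrow> nat" where
  "wt s = (if s = vst (fst s) then 0 else if s = tau (vst (fst s)) then 1 else 2)"

definition cp :: "nat \<Rightarrow> vec3" where
  "cp i = (if i = 1 then ((-1),(-1),1) else if i = 2 then (1,(-1),1) else if i = 3 then ((-1),1,1) else if i = 4 then (1,1,1) else if i = 5 then ((-1),(-1),(-1)) else if i = 6 then (1,(-1),(-1)) else if i = 7 then ((-1),1,(-1)) else (1,1,(-1)))"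

lemma I8: "{1..8::nat} = {1,2,3,4,5,6,7,8}" by auto

lemma F_tau: "\<forall>s\<in>stickers. tau s \<in> stickers \<and> fst (tau s) = fst s \<and> tau (tau (tau s)) = s"
  by (simp only: ball_st) (simp add: mem_st)

lemma F_rep: "\<forall>s\<in>stickers. s = vst (fst s) \<or> s = tau (vst (fst s)) \<or> s = tau (tau (vst (fst s)))"
  by (simp only: ball_st) (simp add: vst_def)

lemma F_wt: "\<forall>s\<in>stickers. wt (tau s) = (wt s + 1) mod 3"
  by (simp only: ball_st) (simp add: vst_def wt_def)

lemma F_vst: "\<forall>p\<in>corners. vst p \<in> stickers"
  by (simp only: ball_co) (simp add: vst_def mem_st)

lemma F_cp: "\<forall>i\<in>{1..8}. cp i \<in> corners \<and> corner_index (cp i) = i"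
  unfolding I8 by (simp add: cp_def ball_co corner_index_def corners_def)

lemma F_ci: "\<forall>p\<in>corners. cp (corner_index p) = p \<and> corner_index p \<in> {1..8}"
  by (simp only: ball_co) (simp add: cp_def corner_index_def)

lemma F_comm: "\<forall>s\<in>stickers. mv_u (tau s) = tau (mv_u s) \<and> mv_d (tau s) = tau (mv_d s) \<and>
   mv_f (tau s) = tau (mv_f s) \<and> mv_b (tau s) = tau (mv_b s) \<and> mv_l (tau s) = tau (mv_l s) \<and> mv_r (tau s) = tau (mv_r s)"
  by (simp only: ball_st) simp

lemma F_mv4: "\<forall>s\<in>stickers. mv_u s \<in> stickers \<and> mv_u (mv_u (mv_u (mv_u s))) = s \<and>
   mv_d s \<in> stickers \<and> mv_d (mv_d (mv_d (mv_d s))) = s \<and>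
   mv_f s \<in> stickers \<and> mv_f (mv_f (mv_f (mv_f s))) = s \<and>
   mv_b s \<in> stickers \<and> mv_b (mv_b (mv_b (mv_b s))) = s \<and>
   mv_l s \<in> stickers \<and> mv_l (mv_l (mv_l (mv_l s))) = s \<and>
   mv_r s \<in> stickers \<and> mv_r (mv_r (mv_r (mv_r s))) = s"
  by (simp only: ball_st) (simp add: mem_st)

lemma corners_fst: "s \<in> stickers \<Longrightarrow> fst s \<in> corners"
  unfolding stickers_def by auto

lemma tau_st: "s \<in> stickers \<Longrightarrow> tau s \<in> stickers" and tau_fst: "s \<in> stickers \<Longrightarrow> fst (tau s) = fst s"
  and tau3: "s \<in> stickers \<Longrightarrow> tau (tau (tau s)) = s"
  using F_tau by blast+

lemma vst_st: "p \<in> corners \<Longrightarrow> vst p \<in> stickers" using F_vst by blast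

lemma fst_vst[simp]: "fst (vst p) = p" by (simp add: vst_def)

lemma taupow_st: "s \<in> stickers \<Longrightarrow> (tau^^n) s \<in> stickers \<and> fst ((tau^^n) s) = fst s"
  by (induct n) (auto simp: tau_st tau_fst)

lemma taupow_mod: "s \<in> stickers \<Longrightarrow> (tau^^n) s = (tau^^(n mod 3)) s"
proof (induct n rule: less_induct)
  case (less n)
  show ?case
  proof (cases "n < 3")
    case True then show ?thesis by simp
  next
    case False
    then have n: "n = (n - 3) + 3" by simp
    have "(tau^^n) s = (tau^^(n-3)) ((tau^^3) s)" by (subst n, simp only: funpow_add comp_def)
    also have "(tau^^3) s = s" using tau3[OF less.prems] by (simp add: eval_nat_numeral)
    also have "(tau^^(n-3)) s = (tau^^((n-3) mod 3)) s" using less.hyps[of "n-3"] less.prems False by simp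
    also have "(n - 3) mod 3 = n mod 3" using False by (simp add: mod_if)
    finally show ?thesis .
  qed
qed

lemma wt_rep: assumes "s \<in> stickers" shows "s = (tau^^(wt s)) (vst (fst s))"
proof -
  define v where "v = vst (fst s)"
  have d: "s = v \<or> s = tau v \<or> s = tau (tau v)" using F_rep assms unfolding v_def by blast
  have w: "wt s = (if s = v then 0 else if s = tau v then 1 else 2)" by (simp add: wt_def v_def)
  show ?thesis unfolding v_def[symmetric] using d w by (auto simp: numeral_2_eq_2)
qed

lemma wt_lt: "wt s < 3" by (simp add: wt_def)

lemma wt_pow: "x \<in> stickers \<Longrightarrow> wt ((tau^^j) x) = (wt x + j) mod 3"
proof (induct j)
  case 0 then show ?case using wt_lt[of x] by simp
next
  case (Suc j)
  have "wt ((tau^^Suc j) x) = (wt ((tau^^j) x) + 1) mod 3"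
    using F_wt taupow_st[OF Suc.prems] by simp
  then show ?case using Suc by (simp add: mod_Suc_eq)
qed

definition rigid :: "(sticker \<Rightarrow> sticker) \<Rightarrow> bool" where
  "rigid g \<longleftrightarrow> g \<in> Bij stickers \<and> (\<forall>s\<in>stickers. g (tau s) = tau (g s))"

lemma rigid_st: "rigid g \<Longrightarrow> s \<in> stickers \<Longrightarrow> g s \<in> stickers"
  unfolding rigid_def using Bij_imp_funcset by blast

lemma rigid_pow: "rigid g \<Longrightarrow> s \<in> stickers \<Longrightarrow> g ((tau^^n) s) = (tau^^n) (g s)"
proof (induct n)
  case 0 then show ?case by simp
next
  case (Suc n)
  then show ?case using taupow_st[OF Suc(3), of n] unfolding rigid_def by simp
qed

definition posmap :: "(sticker \<Rightarrow> sticker) \<Rightarrow> vec3 \<Rightarrow> vec3" where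
  "posmap g p = fst (g (vst p))"

lemma rigid_fst: "rigid g \<Longrightarrow> s \<in> stickers \<Longrightarrow> fst (g s) = posmap g (fst s)"
proof -
  assume r: "rigid g" and s: "s \<in> stickers"
  have v: "vst (fst s) \<in> stickers" using vst_st corners_fst s by blast
  have "g s = g ((tau^^(wt s)) (vst (fst s)))" using wt_rep[OF s] by simp
  also have "\<dots> = (tau^^(wt s)) (g (vst (fst s)))" using rigid_pow[OF r v] .
  finally show ?thesis using taupow_st[OF rigid_st[OF r v]] unfolding posmap_def by simp
qed

lemma corner_pos_eq: "i \<in> {1..8} \<Longrightarrow> corner_pos i = cp i"
  unfolding corner_pos_def
proof (rule the_equality)
  assume "i \<in> {1..8}" then show "cp i \<in> corners \<and> corner_index (cp i) = i" using F_cp by blast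
next
  fix p assume a: "p \<in> corners \<and> corner_index p = i"
  then have "cp (corner_index p) = p" using F_ci by blast
  then show "p = cp i" using a by simp
qed

lemma phi_eq: assumes "rigid g" "i \<in> {1..8}"
  shows "phi g i = corner_index (posmap g (cp i))" "phi g i \<in> {1..8}" "posmap g (cp i) = cp (phi g i)"
proof -
  show 1: "phi g i = corner_index (posmap g (cp i))"
    using assms(2) unfolding phi_def posmap_def vst_def by (simp add: corner_pos_eq)
  have "posmap g (cp i) \<in> corners" unfolding posmap_def
    using corners_fst rigid_st[OF assms(1) vst_st] F_cp assms(2) by blast
  then have "cp (corner_index (posmap g (cp i))) = posmap g (cp i) \<and> corner_index (posmap g (cp i)) \<in> {1..8}"
    using F_ci by blast
  then show "phi g i \<in> {1..8}" "posmap g (cp i) = cp (phi g i)" unfolding 1 by auto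
qed

lemma phi_out: "i \<notin> {1..8} \<Longrightarrow> phi g i = i" unfolding phi_def by (rule if_not_P)

lemma mult_Sym: "f \<in> Bij S \<Longrightarrow> g \<in> Bij S \<Longrightarrow> f \<otimes>\<^bsub>BijGroup S\<^esub> g = (\<lambda>x\<in>S. f (g x))"
  by (simp add: BijGroup_def compose_def)

lemma one_Sym: "\<one>\<^bsub>BijGroup S\<^esub> = (\<lambda>x\<in>S. x)" by (simp add: BijGroup_def)

lemma carrier_Sym: "carrier (BijGroup S) = Bij S" by (simp add: BijGroup_def)

lemma rigid_mult: assumes "rigid f" "rigid g" shows "rigid (f \<otimes>\<^bsub>SymSt\<^esub> g)"
proof -
  have fb: "f \<in> Bij stickers" "g \<in> Bij stickers" using assms rigid_def by auto
  have e: "f \<otimes>\<^bsub>SymSt\<^esub> g = compose stickers f g" using mult_Sym[OF fb] by (simp add: compose_def)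
  show ?thesis unfolding rigid_def e
  proof (intro conjI ballI)
    show "compose stickers f g \<in> Bij stickers" using compose_Bij fb by blast
  next
    fix s assume s: "s \<in> stickers"
    show "compose stickers f g (tau s) = tau (compose stickers f g s)"
      using s tau_st[OF s] rigid_st[OF assms(2) s] assms by (simp add: compose_def rigid_def)
  qed
qed

lemma rigid_one: "rigid \<one>\<^bsub>SymSt\<^esub>"
  unfolding rigid_def one_Sym using id_Bij tau_st by auto

lemma rigid_inv: assumes "rigid g" shows "rigid (inv\<^bsub>SymSt\<^esub> g)"
proof -
  have gb: "g \<in> Bij stickers" using assms rigid_def by auto
  have bij: "bij_betw g stickers stickers" using gb Bij_def by auto
  have e: "inv\<^bsub>SymSt\<^esub> g = (\<lambda>x\<in>stickers. inv_into stickers g x)" using inv_BijGroup[OF gb] .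
  show ?thesis unfolding rigid_def e
  proof (intro conjI ballI)
    show "(\<lambda>x\<in>stickers. inv_into stickers g x) \<in> Bij stickers" using restrict_inv_into_Bij[OF gb] .
  next
    fix s assume s: "s \<in> stickers"
    define t where "t = inv_into stickers g s"
    have t: "t \<in> stickers" "g t = s" using bij s unfolding t_def bij_betw_def
      by (auto simp: inv_into_into f_inv_into_f)
    have "g (tau t) = tau s" using assms t unfolding rigid_def by auto
    then have "inv_into stickers g (tau s) = tau t" using bij tau_st[OF t(1)]
      by (metis bij_betw_def inv_into_f_f)
    then show "(\<lambda>x\<in>stickers. inv_into stickers g x) (tau s) = tau ((\<lambda>x\<in>stickers. inv_into stickers g x) s)"
      using s tau_st[OF s] t_def by simp
  qed
qed

lemma mv_Bij: assumes "\<forall>s\<in>stickers. m s \<in> stickers \<and> m (m (m (m s))) = s" and "m \<in> extensional stickers"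
  shows "m \<in> Bij stickers"
proof -
  have h1: "\<And>s. s \<in> stickers \<Longrightarrow> m s \<in> stickers" using assms(1) by blast
  have h2: "\<And>s. s \<in> stickers \<Longrightarrow> m (m (m (m s))) = s" using assms(1) by blast
  have "bij_betw m stickers stickers"
  proof (rule bij_betw_byWitness[where f' = "\<lambda>s. m (m (m s))"])
    show "\<forall>a\<in>stickers. m (m (m (m a))) = a" using h2 by blast
    show "\<forall>a\<in>stickers. m (m (m (m a))) = a" using h2 by blast
    show "m ` stickers \<subseteq> stickers" using h1 by blast
    show "(\<lambda>s. m (m (m s))) ` stickers \<subseteq> stickers" using h1 by blast
  qed
  then show ?thesis unfolding Bij_def using assms(2) by auto
qed

lemma ext_moves: "mv_u \<in> extensional stickers" "mv_d \<in> extensional stickers" "mv_f \<in> extensional stickers"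
  "mv_b \<in> extensional stickers" "mv_l \<in> extensional stickers" "mv_r \<in> extensional stickers"
  by (simp_all only: mv_u_def mv_d_def mv_f_def mv_b_def mv_l_def mv_r_def face_move_def restrict_extensional)

lemma moves_rigid: "m \<in> cube_moves \<Longrightarrow> rigid m"
proof -
  have b: "mv_u \<in> Bij stickers" "mv_d \<in> Bij stickers" "mv_f \<in> Bij stickers"
    "mv_b \<in> Bij stickers" "mv_l \<in> Bij stickers" "mv_r \<in> Bij stickers"
    by (rule mv_Bij, use F_mv4 in blast, rule ext_moves)+
  assume "m \<in> cube_moves"
  then show ?thesis unfolding cube_moves_def rigid_def using b F_comm by blast
qed

lemma cube_moves_Bij: "cube_moves \<subseteq> carrier SymSt"
  using moves_rigid unfolding rigid_def carrier_Sym by auto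

lemma G2_rigid: "g \<in> G2_set \<Longrightarrow> rigid g"
  unfolding G2_set_def
  by (induct rule: generate.induct) (auto simp: rigid_one rigid_mult rigid_inv moves_rigid)

lemma posmap_mult: assumes "rigid f" "rigid g" "p \<in> corners"
  shows "posmap (f \<otimes>\<^bsub>SymSt\<^esub> g) p = posmap f (posmap g p)"
proof -
  have fb: "f \<in> Bij stickers" "g \<in> Bij stickers" using assms rigid_def by auto
  have v: "vst p \<in> stickers" using vst_st assms(3) .
  have "(f \<otimes>\<^bsub>SymSt\<^esub> g) (vst p) = f (g (vst p))" using mult_Sym[OF fb] v by simp
  then show ?thesis unfolding posmap_def
    using rigid_fst[OF assms(1) rigid_st[OF assms(2) v]] unfolding posmap_def by simp
qed

lemma phi_mult: assumes "rigid f" "rigid g" shows "phi (f \<otimes>\<^bsub>SymSt\<^esub> g) = phi f \<circ> phi g"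
proof
  fix i show "phi (f \<otimes>\<^bsub>SymSt\<^esub> g) i = (phi f \<circ> phi g) i"
  proof (cases "i \<in> {1..8}")
    case True
    have c: "cp i \<in> corners" using F_cp True by blast
    have "phi (f \<otimes>\<^bsub>SymSt\<^esub> g) i = corner_index (posmap (f \<otimes>\<^bsub>SymSt\<^esub> g) (cp i))"
      using phi_eq(1)[OF rigid_mult[OF assms] True] .
    also have "\<dots> = corner_index (posmap f (cp (phi g i)))"
      using posmap_mult[OF assms c] phi_eq(3)[OF assms(2) True] by simp
    also have "\<dots> = phi f (phi g i)" using phi_eq(1)[OF assms(1) phi_eq(2)[OF assms(2) True]] by simp
    finally show ?thesis by simp
  next
    case False then show ?thesis by (simp add: phi_out)
  qed
qed

lemma phi_one: "phi \<one>\<^bsub>SymSt\<^esub> = id"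
proof
  fix i show "phi \<one>\<^bsub>SymSt\<^esub> i = id i"
  proof (cases "i \<in> {1..8}")
    case True
    then show ?thesis using phi_eq(1)[OF rigid_one True] F_cp vst_st
      unfolding posmap_def one_Sym by auto
  next
    case False then show ?thesis by (simp add: phi_out)
  qed
qed

lemma group_Sym: "group SymSt" by (rule group_BijGroup)

lemma phi_perm: assumes "rigid g" shows "phi g permutes {1..8}"
proof -
  have gc: "g \<in> carrier SymSt" using assms rigid_def carrier_Sym by auto
  have gi: "rigid (inv\<^bsub>SymSt\<^esub> g)" using rigid_inv[OF assms] .
  have 1: "phi g \<circ> phi (inv\<^bsub>SymSt\<^esub> g) = id"
    using phi_mult[OF assms gi] group.r_inv[OF group_Sym gc] phi_one by simp
  have 2: "phi (inv\<^bsub>SymSt\<^esub> g) \<circ> phi g = id"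
    using phi_mult[OF gi assms] group.l_inv[OF group_Sym gc] phi_one by simp
  show ?thesis unfolding permutes_def
  proof (intro conjI allI impI)
    fix x :: nat assume "x \<notin> {1..8}" then show "phi g x = x" by (rule phi_out)
  next
    fix y show "\<exists>!x. phi g x = y"
    proof (rule ex1I[where a = "phi (inv\<^bsub>SymSt\<^esub> g) y"])
      show "phi g (phi (inv\<^bsub>SymSt\<^esub> g) y) = y" using fun_cong[OF 1, of y] by simp
    next
      fix x assume "phi g x = y"
      then show "x = phi (inv\<^bsub>SymSt\<^esub> g) y" using fun_cong[OF 2, of x] by simp
    qed
  qed
qed

definition Om :: "(sticker \<Rightarrow> sticker) \<Rightarrow> nat" where
  "Om g = (\<Sum>i\<in>{1..8}. wt (g (vst (cp i))))"

lemma cp_st: "i \<in> {1..8} \<Longrightarrow> vst (cp i) \<in> stickers" using F_cp vst_st by blast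

lemma wt_mult: assumes "rigid f" "rigid g" "i \<in> {1..8}"
  shows "wt ((f \<otimes>\<^bsub>SymSt\<^esub> g) (vst (cp i))) = (wt (f (vst (cp (phi g i)))) + wt (g (vst (cp i)))) mod 3"
proof -
  have fb: "f \<in> Bij stickers" "g \<in> Bij stickers" using assms rigid_def by auto
  define x where "x = g (vst (cp i))"
  have xs: "x \<in> stickers" using rigid_st[OF assms(2) cp_st[OF assms(3)]] x_def by simp
  have fx: "fst x = cp (phi g i)" using phi_eq(3)[OF assms(2,3)] x_def posmap_def by simp
  have x: "x = (tau^^(wt x)) (vst (cp (phi g i)))" using wt_rep[OF xs] fx by simp
  have v2: "vst (cp (phi g i)) \<in> stickers" using cp_st phi_eq(2)[OF assms(2,3)] by blast
  have "(f \<otimes>\<^bsub>SymSt\<^esub> g) (vst (cp i)) = f x" using mult_Sym[OF fb] cp_st[OF assms(3)] x_def by simp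
  also have "\<dots> = (tau^^(wt x)) (f (vst (cp (phi g i))))"
    by (subst x, rule rigid_pow[OF assms(1) v2])
  finally show ?thesis using wt_pow[OF rigid_st[OF assms(1) v2]] x_def by simp
qed

lemma Om_mult: assumes "rigid f" "rigid g"
  shows "Om (f \<otimes>\<^bsub>SymSt\<^esub> g) mod 3 = (Om f + Om g) mod 3"
proof -
  have "Om (f \<otimes>\<^bsub>SymSt\<^esub> g) = (\<Sum>i\<in>{1..8}. (wt (f (vst (cp (phi g i)))) + wt (g (vst (cp i)))) mod 3)"
    unfolding Om_def using wt_mult[OF assms] by (intro sum.cong) auto
  then have "Om (f \<otimes>\<^bsub>SymSt\<^esub> g) mod 3 = (\<Sum>i\<in>{1..8}. wt (f (vst (cp (phi g i)))) + wt (g (vst (cp i)))) mod 3"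
    by (simp add: mod_sum_eq)
  also have "(\<Sum>i\<in>{1..8}. wt (f (vst (cp (phi g i)))) + wt (g (vst (cp i))))
      = (\<Sum>i\<in>{1..8}. wt (f (vst (cp (phi g i))))) + Om g"
    unfolding Om_def by (simp add: sum.distrib)
  also have "(\<Sum>i\<in>{1..8}. wt (f (vst (cp (phi g i))))) = Om f"
    unfolding Om_def using sum.permute[OF phi_perm[OF assms(2)], of "\<lambda>i. wt (f (vst (cp i)))"]
    by (simp add: comp_def)
  finally show ?thesis .
qed

lemma Om_one: "Om \<one>\<^bsub>SymSt\<^esub> = 0"
  unfolding Om_def one_Sym using cp_st by (simp add: wt_def)

lemma Om_vals: "Om mv_u = 0" "Om mv_d = 0" "Om mv_f = 6" "Om mv_b = 6" "Om mv_l = 6" "Om mv_r = 6"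
  unfolding Om_def I8 by (simp_all add: vst_def cp_def wt_def)

lemma Om_moves: "m \<in> cube_moves \<Longrightarrow> Om m mod 3 = 0"
  unfolding cube_moves_def using Om_vals by auto

lemma mod3_h1: "(a + b) mod 3 = 0 \<Longrightarrow> b mod 3 = 0 \<Longrightarrow> a mod 3 = (0::nat)" by presburger
lemma mod3_h2: "a mod 3 = 0 \<Longrightarrow> b mod 3 = 0 \<Longrightarrow> (a + b) mod 3 = (0::nat)" by presburger

lemma Om_inv: assumes "rigid g" "Om g mod 3 = 0" shows "Om (inv\<^bsub>SymSt\<^esub> g) mod 3 = 0"
proof -
  have gc: "g \<in> carrier SymSt" using assms rigid_def carrier_Sym by auto
  have "Om (inv\<^bsub>SymSt\<^esub> g \<otimes>\<^bsub>SymSt\<^esub> g) mod 3 = 0"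
    using group.l_inv[OF group_Sym gc] Om_one by simp
  then show ?thesis using Om_mult[OF rigid_inv[OF assms(1)] assms(1)] assms(2) mod3_h1 by simp
qed

lemma Om_G2: "g \<in> G2_set \<Longrightarrow> rigid g \<and> Om g mod 3 = 0"
  unfolding G2_set_def
proof (induct rule: generate.induct)
  case one
  show ?case using rigid_one Om_one by simp
next
  case (incl h)
  show ?case using moves_rigid[OF incl] Om_moves[OF incl] by (rule conjI)
next
  case (inv h)
  show ?case using rigid_inv[OF moves_rigid[OF inv]] Om_inv[OF moves_rigid[OF inv] Om_moves[OF inv]] by (rule conjI)
next
  case (eng h1 h2)
  then have r: "rigid h1" "rigid h2" and o: "Om h1 mod 3 = 0" "Om h2 mod 3 = 0" by auto
  show ?case using rigid_mult[OF r] Om_mult[OF r] mod3_h2[OF o] by simp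
qed

definition tw :: "(nat \<Rightarrow> nat) \<Rightarrow> sticker \<Rightarrow> sticker" where
  "tw k = (\<lambda>s\<in>stickers. (tau^^(k (corner_index (fst s)))) s)"

lemma ci_st: "s \<in> stickers \<Longrightarrow> corner_index (fst s) \<in> {1..8}"
  using F_ci corners_fst by blast

lemma tw_st: "s \<in> stickers \<Longrightarrow> tw k s \<in> stickers \<and> fst (tw k s) = fst s"
  unfolding tw_def using taupow_st by simp

lemma tw_app: "s \<in> stickers \<Longrightarrow> tw k s = (tau^^(k (corner_index (fst s)))) s"
  by (simp add: tw_def)

lemma tw_comp: "(\<lambda>s\<in>stickers. tw a (tw b s)) = tw (\<lambda>i. a i + b i)"
proof
  fix s show "(\<lambda>s\<in>stickers. tw a (tw b s)) s = tw (\<lambda>i. a i + b i) s"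
  proof (cases "s \<in> stickers")
    case True
    have st: "tw b s \<in> stickers" "fst (tw b s) = fst s" using tw_st[OF True, of b] by auto
    have "tw a (tw b s) = (tau^^(a (corner_index (fst s)))) ((tau^^(b (corner_index (fst s)))) s)"
      using tw_app[OF st(1), of a] tw_app[OF True, of b] st(2) by simp
    also have "\<dots> = (tau^^(a (corner_index (fst s)) + b (corner_index (fst s)))) s"
      by (simp only: funpow_add comp_def)
    also have "\<dots> = tw (\<lambda>i. a i + b i) s" using tw_app[OF True] by simp
    finally show ?thesis using True by simp
  next
    case False then show ?thesis by (simp add: tw_def)
  qed
qed

lemma tw_cong: assumes "\<forall>i\<in>{1..8}. k i mod 3 = k' i mod 3" shows "tw k = tw k'"
proof
  fix s show "tw k s = tw k' s"
  proof (cases "s \<in> stickers")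
    case True
    have e: "k (corner_index (fst s)) mod 3 = k' (corner_index (fst s)) mod 3"
      using ci_st[OF True] assms by blast
    have "tw k s = (tau^^(k (corner_index (fst s)) mod 3)) s"
      using tw_app[OF True] taupow_mod[OF True] by simp
    also have "\<dots> = (tau^^(k' (corner_index (fst s)) mod 3)) s" using e by simp
    also have "\<dots> = tw k' s" using tw_app[OF True] taupow_mod[OF True] by simp
    finally show ?thesis .
  next
    case False then show ?thesis by (simp add: tw_def)
  qed
qed

lemma tw_zero: "tw (\<lambda>i. 0) = \<one>\<^bsub>SymSt\<^esub>"
  unfolding tw_def one_Sym by simp

lemma tw_Bij: "tw k \<in> Bij stickers"
proof -
  have inv: "tw (\<lambda>i. 2 * k i) (tw k s) = s" "tw k (tw (\<lambda>i. 2 * k i) s) = s" if s: "s \<in> stickers" for s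
  proof -
    have "tw (\<lambda>i. 2 * k i + k i) = tw (\<lambda>i. 0)" "tw (\<lambda>i. k i + 2 * k i) = tw (\<lambda>i. 0)"
      by (rule tw_cong, simp)+
    then show "tw (\<lambda>i. 2 * k i) (tw k s) = s" "tw k (tw (\<lambda>i. 2 * k i) s) = s"
      using fun_cong[OF tw_comp[of "\<lambda>i. 2 * k i" k], of s] fun_cong[OF tw_comp[of k "\<lambda>i. 2 * k i"], of s]
        s tw_zero by (simp_all add: one_Sym)
  qed
  have "bij_betw (tw k) stickers stickers"
  proof (rule bij_betw_byWitness[where f' = "tw (\<lambda>i. 2 * k i)"])
    show "\<forall>a\<in>stickers. tw (\<lambda>i. 2 * k i) (tw k a) = a" using inv by blast
    show "\<forall>a\<in>stickers. tw k (tw (\<lambda>i. 2 * k i) a) = a" using inv by blast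
    show "tw k ` stickers \<subseteq> stickers" using tw_st by blast
    show "tw (\<lambda>i. 2 * k i) ` stickers \<subseteq> stickers" using tw_st by blast
  qed
  then show ?thesis unfolding Bij_def tw_def by auto
qed

lemma tw_rigid: "rigid (tw k)"
  unfolding rigid_def
proof (intro conjI ballI)
  show "tw k \<in> Bij stickers" by (rule tw_Bij)
next
  fix s assume s: "s \<in> stickers"
  show "tw k (tau s) = tau (tw k s)"
    using s tau_st[OF s] tau_fst[OF s] unfolding tw_def by (simp add: funpow_swap1)
qed

lemma tw_mult: "tw a \<otimes>\<^bsub>SymSt\<^esub> tw b = tw (\<lambda>i. a i + b i)"
  using mult_Sym[OF tw_Bij tw_Bij] tw_comp by simp

lemma tw_inv: "inv\<^bsub>SymSt\<^esub> (tw k) = tw (\<lambda>i. 2 * k i)"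
proof (rule group.inv_equality[OF group_Sym])
  have "tw (\<lambda>i. 2 * k i + k i) = tw (\<lambda>i. 0)" by (rule tw_cong, simp)
  then show "tw (\<lambda>i. 2 * k i) \<otimes>\<^bsub>SymSt\<^esub> tw k = \<one>\<^bsub>SymSt\<^esub>" using tw_mult tw_zero by simp
  show "tw k \<in> carrier SymSt" "tw (\<lambda>i. 2 * k i) \<in> carrier SymSt" using tw_Bij carrier_Sym by auto
qed

lemma conj_tw: assumes "rigid g" "\<forall>i\<in>{1..8}. k' (phi g i) mod 3 = k i mod 3"
  shows "g \<otimes>\<^bsub>SymSt\<^esub> tw k = tw k' \<otimes>\<^bsub>SymSt\<^esub> g"
proof -
  have gb: "g \<in> Bij stickers" using assms rigid_def by auto
  have "(\<lambda>s\<in>stickers. g (tw k s)) = (\<lambda>s\<in>stickers. tw k' (g s))"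
  proof (rule restrict_ext)
    fix s assume s: "s \<in> stickers"
    define i where "i = corner_index (fst s)"
    have i: "i \<in> {1..8}" using ci_st[OF s] i_def by simp
    have cpi: "cp i = fst s" using F_ci corners_fst[OF s] i_def by blast
    have gs: "g s \<in> stickers" using rigid_st[OF assms(1) s] .
    have "fst (g s) = cp (phi g i)" using rigid_fst[OF assms(1) s] phi_eq(3)[OF assms(1) i] cpi by simp
    then have ci: "corner_index (fst (g s)) = phi g i" using F_cp phi_eq(2)[OF assms(1) i] by simp
    have "g (tw k s) = (tau^^(k i)) (g s)" using s rigid_pow[OF assms(1) s] unfolding tw_def i_def by simp
    also have "\<dots> = (tau^^(k' (phi g i))) (g s)"
      using taupow_mod[OF gs, of "k i"] taupow_mod[OF gs, of "k' (phi g i)"] assms(2) i by simp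
    also have "\<dots> = tw k' (g s)" using gs ci unfolding tw_def by simp
    finally show "g (tw k s) = tw k' (g s)" .
  qed
  then show ?thesis using mult_Sym[OF gb tw_Bij] mult_Sym[OF tw_Bij gb] by simp
qed

lemma pure_tw: assumes "rigid g" "phi g = id" shows "g = tw (\<lambda>i. wt (g (vst (cp i))))"
proof
  fix s show "g s = tw (\<lambda>i. wt (g (vst (cp i)))) s"
  proof (cases "s \<in> stickers")
    case s: True
    define i where "i = corner_index (fst s)"
    have i: "i \<in> {1..8}" using ci_st[OF s] i_def by simp
    have cpi: "cp i = fst s" using F_ci corners_fst[OF s] i_def by blast
    have v: "vst (cp i) \<in> stickers" using cp_st[OF i] .
    have gv: "g (vst (cp i)) \<in> stickers" using rigid_st[OF assms(1) v] .
    have fg: "fst (g (vst (cp i))) = cp i" using phi_eq(3)[OF assms(1) i] assms(2) posmap_def by simp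
    have gvr: "g (vst (cp i)) = (tau^^(wt (g (vst (cp i))))) (vst (cp i))" using wt_rep[OF gv] unfolding fg .
    have sr: "s = (tau^^(wt s)) (vst (cp i))" using wt_rep[OF s] unfolding cpi .
    have "g s = g ((tau^^(wt s)) (vst (cp i)))" by (rule arg_cong[OF sr])
    also have "\<dots> = (tau^^(wt s)) (g (vst (cp i)))" using rigid_pow[OF assms(1) v] .
    also have "\<dots> = (tau^^(wt s)) ((tau^^(wt (g (vst (cp i))))) (vst (cp i)))" by (rule arg_cong[OF gvr])
    also have "\<dots> = (tau^^(wt (g (vst (cp i))))) ((tau^^(wt s)) (vst (cp i)))"
      by (simp only: comp_apply[symmetric, of "tau^^_" "tau^^_"] funpow_add[symmetric] add.commute)
    also have "\<dots> = (tau^^(wt (g (vst (cp i))))) s" by (rule arg_cong[OF sr[symmetric]])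
    finally have c: "g s = (tau^^(wt (g (vst (cp i))))) s" .
    have "tw (\<lambda>j. wt (g (vst (cp j)))) s = (tau^^(wt (g (vst (cp i))))) s"
      using tw_app[OF s, of "\<lambda>j. wt (g (vst (cp j)))"] unfolding i_def by assumption
    then show ?thesis unfolding c by (rule sym)
  next
    case False
    have "g \<in> extensional stickers" using assms(1) unfolding rigid_def Bij_def by blast
    then have "g s = undefined" using False by (rule extensional_arb)
    moreover have "tw (\<lambda>i. wt (g (vst (cp i)))) s = undefined" using False unfolding tw_def by (simp add: restrict_def)
    ultimately show ?thesis by simp
  qed
qed

lemma Om_tw: "Om (tw k) mod 3 = (\<Sum>i\<in>{1..8}. k i) mod 3"
proof -
  have "Om (tw k) = (\<Sum>i\<in>{1..8}. k i mod 3)"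
    unfolding Om_def
  proof (rule sum.cong)
    fix i :: nat assume i: "i \<in> {1..8}"
    have "tw k (vst (cp i)) = (tau^^(k i)) (vst (cp i))" using cp_st[OF i] F_cp i unfolding tw_def by simp
    moreover have "wt (vst (cp i)) = 0" by (simp add: wt_def)
    ultimately show "wt (tw k (vst (cp i))) = k i mod 3" using wt_pow[OF cp_st[OF i]] by simp
  qed simp
  then show ?thesis by (simp add: mod_sum_eq)
qed

lemma phi_u: "phi mv_u = transpose 1 3 \<circ> transpose 3 4 \<circ> transpose 4 2"
  by (rule ext, case_tac "x \<in> {1..8}", simp_all only: I8 phi_out,
      auto simp: phi_def corner_pos_eq cp_def corner_index_def transpose_def)

lemma phi_d: "phi mv_d = transpose 5 6 \<circ> transpose 6 8 \<circ> transpose 8 7"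
  by (rule ext, case_tac "x \<in> {1..8}", simp_all only: I8 phi_out,
      auto simp: phi_def corner_pos_eq cp_def corner_index_def transpose_def)

lemma phi_f: "phi mv_f = transpose 1 2 \<circ> transpose 2 6 \<circ> transpose 6 5"
  by (rule ext, case_tac "x \<in> {1..8}", simp_all only: I8 phi_out,
      auto simp: phi_def corner_pos_eq cp_def corner_index_def transpose_def)

lemma phi_b: "phi mv_b = transpose 3 7 \<circ> transpose 7 8 \<circ> transpose 8 4"
  by (rule ext, case_tac "x \<in> {1..8}", simp_all only: I8 phi_out,
      auto simp: phi_def corner_pos_eq cp_def corner_index_def transpose_def)

lemma phi_l: "phi mv_l = transpose 1 5 \<circ> transpose 5 7 \<circ> transpose 7 3"
  by (rule ext, case_tac "x \<in> {1..8}", simp_all only: I8 phi_out,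
      auto simp: phi_def corner_pos_eq cp_def corner_index_def transpose_def)

lemma phi_r: "phi mv_r = transpose 2 4 \<circ> transpose 4 8 \<circ> transpose 8 6"
  by (rule ext, case_tac "x \<in> {1..8}", simp_all only: I8 phi_out,
      auto simp: phi_def corner_pos_eq cp_def corner_index_def transpose_def)

lemmas phi_moves = phi_u phi_d phi_f phi_b phi_l phi_r

lemma odd_moves: "m \<in> cube_moves \<Longrightarrow> \<not> evenperm (phi m)"
  unfolding cube_moves_def
  by (auto simp: phi_moves evenperm_comp permutation_compose permutation_swap_id evenperm_swap)

abbreviation gens :: "(sticker \<Rightarrow> sticker) set" where
  "gens \<equiv> cube_moves \<union> (\<lambda>g. inv\<^bsub>SymSt\<^esub> g) ` cube_moves"

lemma gens_G2: assumes "x \<in> gens" shows "x \<in> G2_set"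
proof (cases "x \<in> cube_moves")
  case True then show ?thesis unfolding G2_set_def by (rule generate.incl)
next
  case False
  then obtain m where m: "m \<in> cube_moves" "x = inv\<^bsub>SymSt\<^esub> m" using assms by blast
  show ?thesis unfolding G2_set_def m(2) using m(1) by (rule generate.inv)
qed

lemma gens_rigid: "x \<in> gens \<Longrightarrow> rigid x" using moves_rigid rigid_inv by auto

lemma gens_carrier: "gens \<subseteq> carrier SymSt"
  using gens_rigid unfolding rigid_def carrier_Sym by auto

lemma phi_permutation: "rigid g \<Longrightarrow> permutation (phi g)"
  using phi_perm permutes_imp_permutation by blast

lemma gens_odd: assumes "x \<in> gens" shows "\<not> evenperm (phi x)"
proof (cases "x \<in> cube_moves")
  case True then show ?thesis using odd_moves by blast
next
  case False
  then obtain m where m: "m \<in> cube_moves" "x = inv\<^bsub>SymSt\<^esub> m" using assms by blast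
  have r: "rigid m" using moves_rigid m(1) by blast
  have mc: "m \<in> carrier SymSt" using r rigid_def carrier_Sym by auto
  have "phi x \<circ> phi m = id"
    using phi_mult[OF rigid_inv[OF r] r] group.l_inv[OF group_Sym mc] phi_one m(2) by simp
  then have "evenperm (phi x) = evenperm (phi m)"
    using evenperm_comp[OF phi_permutation[OF rigid_inv[OF r]] phi_permutation[OF r]] m(2) by simp
  then show ?thesis using odd_moves[OF m(1)] by simp
qed

lemma word_cons: "word_eval (x # w) = x \<otimes>\<^bsub>SymSt\<^esub> word_eval w" by (simp add: word_eval_def)
lemma word_nil: "word_eval [] = \<one>\<^bsub>SymSt\<^esub>" by (simp add: word_eval_def)

lemma word_G2: "set w \<subseteq> gens \<Longrightarrow> word_eval w \<in> G2_set"
proof (induct w)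
  case Nil show ?case unfolding word_nil G2_set_def by (rule generate.one)
next
  case (Cons x w)
  then show ?case unfolding word_cons G2_set_def using gens_G2[of x] generate.eng
    unfolding G2_set_def by auto
qed

lemma word_parity: "set w \<subseteq> gens \<Longrightarrow> evenperm (phi (word_eval w)) = even (length w)"
proof (induct w)
  case Nil then show ?case by (simp add: word_nil phi_one)
next
  case (Cons x w)
  have x: "x \<in> gens" and w: "set w \<subseteq> gens" using Cons.prems by auto
  have rx: "rigid x" using gens_rigid[OF x] .
  have rw: "rigid (word_eval w)" using G2_rigid[OF word_G2[OF w]] .
  have "evenperm (phi (word_eval (x # w))) = (evenperm (phi x) = evenperm (phi (word_eval w)))"
    unfolding word_cons phi_mult[OF rx rw]
    by (rule evenperm_comp[OF phi_permutation[OF rx] phi_permutation[OF rw]])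
  then show ?case using Cons.hyps[OF w] gens_odd[OF x] by simp
qed

lemma word_carrier: "set w \<subseteq> carrier SymSt \<Longrightarrow> word_eval w \<in> carrier SymSt"
  by (induct w) (auto simp: word_nil word_cons group.is_monoid[OF group_Sym] monoid.m_closed monoid.one_closed)

lemma word_app: "set w1 \<subseteq> carrier SymSt \<Longrightarrow> set w2 \<subseteq> carrier SymSt \<Longrightarrow>
    word_eval (w1 @ w2) = word_eval w1 \<otimes>\<^bsub>SymSt\<^esub> word_eval w2"
proof (induct w1)
  case Nil then show ?case
    using group.is_monoid[OF group_Sym] monoid.l_one word_carrier by (simp add: word_nil) 
next
  case (Cons x w1)
  then show ?case using monoid.m_assoc[OF group.is_monoid[OF group_Sym]] word_carrier
    by (simp add: word_cons)
qed

lemma G2_word: "g \<in> G2_set \<Longrightarrow> \<exists>w. set w \<subseteq> gens \<and> word_eval w = g"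
  unfolding G2_set_def
proof (induct rule: generate.induct)
  case one then show ?case using word_nil by (intro exI[of _ "[]"]) simp
next
  case (incl h)
  have "h \<in> carrier SymSt" using incl cube_moves_Bij by blast
  then have "word_eval [h] = h" using monoid.r_one[OF group.is_monoid[OF group_Sym]]
    by (simp add: word_cons word_nil)
  then show ?case using incl by (intro exI[of _ "[h]"]) auto
next
  case (inv h)
  have "h \<in> carrier SymSt" using inv cube_moves_Bij by blast
  then have "inv\<^bsub>SymSt\<^esub> h \<in> carrier SymSt" using group.inv_closed[OF group_Sym] by blast
  then have "word_eval [inv\<^bsub>SymSt\<^esub> h] = inv\<^bsub>SymSt\<^esub> h" using monoid.r_one[OF group.is_monoid[OF group_Sym]]
    by (simp add: word_cons word_nil)
  then show ?case using inv by (intro exI[of _ "[inv\<^bsub>SymSt\<^esub> h]"]) auto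
next
  case (eng h1 h2)
  then obtain w1 w2 where w: "set w1 \<subseteq> gens" "word_eval w1 = h1" "set w2 \<subseteq> gens" "word_eval w2 = h2"
    by blast
  have s1: "set w1 \<subseteq> carrier SymSt" using w(1) gens_carrier by (rule subset_trans)
  have s2: "set w2 \<subseteq> carrier SymSt" using w(3) gens_carrier by (rule subset_trans)
  have "word_eval (w1 @ w2) = h1 \<otimes>\<^bsub>SymSt\<^esub> h2"
    using word_app[OF s1 s2] w(2,4) by simp
  then show ?case using w by (intro exI[of _ "w1 @ w2"]) auto
qed

lemma sq_in_index2:
  assumes H: "subgroup H (sym_group n)" and c: "2 * card H = fact n" and x: "x \<in> carrier (sym_group n)"
  shows "x \<circ> x \<in> H"
proof (rule ccontr)
  assume nx2: "x \<circ> x \<notin> H"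
  interpret S: group "sym_group n" by (rule sym_group_is_group)
  let ?C = "carrier (sym_group n)"
  have fin: "finite ?C" unfolding sym_group_def by (simp add: finite_permutations)
  have HC: "H \<subseteq> ?C" using subgroup.subset[OF H] .
  have finH: "finite H" using finite_subset[OF HC fin] .
  have mult: "\<And>a b. a \<otimes>\<^bsub>sym_group n\<^esub> b = a \<circ> b" by (simp add: sym_group_mult)
  have nx: "x \<notin> H"
  proof
    assume "x \<in> H" then have "x \<otimes>\<^bsub>sym_group n\<^esub> x \<in> H" using subgroup.m_closed[OF H] by blast
    then show False using nx2 mult by simp
  qed
  define f :: "(nat \<Rightarrow> nat) \<Rightarrow> nat \<Rightarrow> nat" where "f h = h \<circ> x" for h
  have inj: "inj_on f H"
  proof (rule inj_onI)
    fix h h' assume "h \<in> H" "h' \<in> H" "f h = f h'"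
    then show "h = h'" using S.right_cancel[OF x, of h h'] HC mult f_def by auto
  qed
  have img: "f ` H \<subseteq> ?C - H"
  proof
    fix y assume "y \<in> f ` H"
    then obtain h where h: "h \<in> H" "y = h \<circ> x" using f_def by auto
    have hc: "h \<in> ?C" using h HC by blast
    have yc: "y \<in> ?C" using S.m_closed[OF hc x] h mult by simp
    have "y \<notin> H"
    proof
      assume "y \<in> H"
      then have "inv\<^bsub>sym_group n\<^esub> h \<otimes>\<^bsub>sym_group n\<^esub> y \<in> H"
        using subgroup.m_closed[OF H] subgroup.m_inv_closed[OF H h(1)] by blast
      moreover have "inv\<^bsub>sym_group n\<^esub> h \<otimes>\<^bsub>sym_group n\<^esub> y = x"
        using h(2) mult S.m_assoc[symmetric, OF S.inv_closed[OF hc] hc x] S.l_inv[OF hc] S.l_one[OF x] by simp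
      ultimately show False using nx by simp
    qed
    then show "y \<in> ?C - H" using yc by blast
  qed
  have "card (f ` H) = card H" using card_image[OF inj] .
  moreover have "card (?C - H) = card H"
    using card_Diff_subset[OF finH HC] sym_group_card_carrier[of n] c by simp
  ultimately have "f ` H = ?C - H" using card_subset_eq[OF _ img] fin by simp
  moreover have "x \<circ> x \<in> ?C - H" using S.m_closed[OF x x] mult nx2 by simp
  ultimately obtain h where h: "h \<in> H" "x \<circ> x = h \<circ> x" unfolding f_def by auto
  then have "x = h" using S.right_cancel[OF x x, of h] HC mult by auto
  then show False using nx h by simp
qed

lemma three_cycle_sq:
  assumes "distinct [a, b, e]"
  shows "cycle_of_list [a, b, e] = cycle_of_list [a, e, b] \<circ> cycle_of_list [a, e, b]"
proof
  fix y show "cycle_of_list [a, b, e] y = (cycle_of_list [a, e, b] \<circ> cycle_of_list [a, e, b]) y"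
    using assms by (auto simp: transpose_def)
qed

lemma A8_sub:
  assumes H: "subgroup H (sym_group 8)" and c: "2 * card H = fact 8"
  shows "carrier (alt_group 8) \<subseteq> H"
proof -
  have tc: "three_cycles 8 \<subseteq> H"
  proof
    fix p assume "p \<in> three_cycles 8"
    then obtain cs where cs: "p = cycle_of_list cs" "cycle cs" "length cs = 3" "set cs \<subseteq> {1..8}"
      by auto
    obtain a b e where abe: "cs = [a, b, e]" using stupid_lemma[OF cs(3)] by auto
    have q: "cycle_of_list [a, e, b] \<in> carrier (sym_group 8)"
      unfolding sym_group_carrier using permutes_subset[OF cycle_permutes, of "[a, e, b]"] cs(4) abe
      by auto
    have "p = cycle_of_list [a, e, b] \<circ> cycle_of_list [a, e, b]"
      using three_cycle_sq[of a b e] cs(1,2) abe by simp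
    then show "p \<in> H" using sq_in_index2[OF H c q] by simp
  qed
  have "generate (sym_group 8) (three_cycles 8) \<subseteq> H"
    by (rule group.generate_subgroup_incl[OF sym_group_is_group tc H])
  moreover have ag: "(sym_group 8) \<lparr> carrier := carrier (alt_group 8) \<rparr> = alt_group 8"
    unfolding alt_group_def by (rule monoid.equality) simp_all
  have "generate (alt_group 8) (three_cycles 8) = generate (sym_group 8) (three_cycles 8)"
    using group.generate_consistent[OF sym_group_is_group three_cycles_incl[of 8] alt_group_is_subgroup[of 8]] unfolding ag .
  ultimately show ?thesis using alt_group_carrier_as_three_cycles[of 8] by simp
qed

lemma word_moves: "set ms \<subseteq> cube_moves \<Longrightarrow> word_eval ms = restrict (foldr (\<circ>) ms id) stickers"
proof (induct ms)
  case Nil show ?case by (simp add: word_nil one_Sym id_def)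
next
  case (Cons x ms)
  have x: "x \<in> Bij stickers" using Cons.prems cube_moves_Bij carrier_Sym by auto
  have ms: "set ms \<subseteq> cube_moves" using Cons.prems by auto
  have W: "word_eval ms \<in> Bij stickers" using word_carrier[of ms] ms cube_moves_Bij carrier_Sym by auto
  have "word_eval (x # ms) = (\<lambda>s\<in>stickers. x (word_eval ms s))" unfolding word_cons by (rule mult_Sym[OF x W])
  also have "\<dots> = restrict (foldr (\<circ>) (x # ms) id) stickers" unfolding Cons.hyps[OF ms]
    by (intro restrict_ext) simp
  finally show ?case .
qed

definition Tw :: "(sticker \<Rightarrow> sticker) list" where
  "Tw = [mv_l,mv_l,mv_l,mv_d,mv_f,mv_f,mv_f,mv_l,mv_f,mv_f,mv_f,mv_r,mv_r,mv_r,mv_u,mv_u,mv_f,mv_f,mv_r,mv_f]"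

definition k0 :: "nat \<Rightarrow> nat" where "k0 i = (if i = 1 then 1 else if i = 2 then 2 else 0)"

lemma Tw_check: "\<forall>s\<in>stickers. foldr (\<circ>) Tw id s = (if corner_index (fst s) = 1 then tau s
    else if corner_index (fst s) = 2 then tau (tau s) else s)"
  by (simp only: ball_st) (simp add: Tw_def corner_index_def)

lemma Tw_moves: "set Tw \<subseteq> cube_moves" by (simp add: Tw_def cube_moves_def)

lemma T_tw: "word_eval Tw = tw k0"
  unfolding word_moves[OF Tw_moves] tw_def
proof (rule restrict_ext)
  fix s assume s: "s \<in> stickers"
  have t2: "(tau^^2) s = tau (tau s)" by (simp add: eval_nat_numeral)
  show "foldr (\<circ>) Tw id s = (tau ^^ k0 (corner_index (fst s))) s"
    using Tw_check s t2 by (auto simp: k0_def)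
qed

lemma T_G2: "tw k0 \<in> G2_set"
  using word_G2[of Tw] Tw_moves T_tw by auto

lemma G2_carrier: "carrier G2 = G2_set" by (simp add: G2_def)
lemma G2_mult: "x \<otimes>\<^bsub>G2\<^esub> y = x \<otimes>\<^bsub>SymSt\<^esub> y" by (simp add: G2_def)
lemma G2_one: "\<one>\<^bsub>G2\<^esub> = \<one>\<^bsub>SymSt\<^esub>" by (simp add: G2_def)
lemma G2_sub: "subgroup G2_set SymSt"
  unfolding G2_set_def by (rule group.generate_is_subgroup[OF group_Sym cube_moves_Bij])
lemma G2_inv: "x \<in> G2_set \<Longrightarrow> inv\<^bsub>G2\<^esub> x = inv\<^bsub>SymSt\<^esub> x"
  unfolding G2_def using group.m_inv_consistent[OF group_Sym G2_sub] by blast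

lemma G2_Bij: "x \<in> G2_set \<Longrightarrow> x \<in> carrier SymSt"
  using G2_rigid[of x] unfolding rigid_def carrier_Sym by blast

lemma conj_elem:
  assumes nN: "N \<lhd> G2" "n \<in> N" and ph: "\<forall>i\<in>{1..8}. k' (phi n i) mod 3 = k0 i mod 3"
  shows "tw (\<lambda>i. k' i + 2 * k0 i) \<in> N"
proof -
  interpret N: normal N G2 by (rule nN(1))
  interpret S: group SymSt by (rule group_Sym)
  have nG: "n \<in> G2_set" using N.subset nN(2) G2_carrier by auto
  have T: "tw k0 \<in> G2_set" by (rule T_G2)
  have nc: "n \<in> carrier SymSt" using G2_Bij[OF nG] .
  have Tc: "tw k0 \<in> carrier SymSt" using G2_Bij[OF T] .
  have kc: "tw k' \<in> carrier SymSt" using tw_Bij carrier_Sym by auto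
  have "tw k0 \<otimes>\<^bsub>G2\<^esub> inv\<^bsub>G2\<^esub> n \<otimes>\<^bsub>G2\<^esub> inv\<^bsub>G2\<^esub> (tw k0) \<in> N"
    using N.inv_op_closed2[of "tw k0" "inv\<^bsub>G2\<^esub> n"] T G2_carrier N.m_inv_closed nN(2) by auto
  then have e1: "n \<otimes>\<^bsub>G2\<^esub> (tw k0 \<otimes>\<^bsub>G2\<^esub> inv\<^bsub>G2\<^esub> n \<otimes>\<^bsub>G2\<^esub> inv\<^bsub>G2\<^esub> (tw k0)) \<in> N"
    using N.m_closed nN(2) by blast
  have conj: "n \<otimes>\<^bsub>SymSt\<^esub> tw k0 = tw k' \<otimes>\<^bsub>SymSt\<^esub> n"
    by (rule conj_tw[OF G2_rigid[OF nG] ph])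
  have "n \<otimes>\<^bsub>G2\<^esub> (tw k0 \<otimes>\<^bsub>G2\<^esub> inv\<^bsub>G2\<^esub> n \<otimes>\<^bsub>G2\<^esub> inv\<^bsub>G2\<^esub> (tw k0))
      = n \<otimes>\<^bsub>SymSt\<^esub> (tw k0 \<otimes>\<^bsub>SymSt\<^esub> inv\<^bsub>SymSt\<^esub> n \<otimes>\<^bsub>SymSt\<^esub> inv\<^bsub>SymSt\<^esub> (tw k0))"
    using G2_inv[OF nG] G2_inv[OF T] by (simp add: G2_mult)
  also have "\<dots> = (n \<otimes>\<^bsub>SymSt\<^esub> tw k0) \<otimes>\<^bsub>SymSt\<^esub> inv\<^bsub>SymSt\<^esub> n \<otimes>\<^bsub>SymSt\<^esub> inv\<^bsub>SymSt\<^esub> (tw k0)"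
    using nc Tc by (simp add: S.m_assoc)
  also have "\<dots> = tw k' \<otimes>\<^bsub>SymSt\<^esub> (n \<otimes>\<^bsub>SymSt\<^esub> inv\<^bsub>SymSt\<^esub> n) \<otimes>\<^bsub>SymSt\<^esub> inv\<^bsub>SymSt\<^esub> (tw k0)"
    unfolding conj using nc kc by (simp add: S.m_assoc)
  also have "\<dots> = tw k' \<otimes>\<^bsub>SymSt\<^esub> tw (\<lambda>i. 2 * k0 i)"
    using nc kc by (simp add: tw_inv)
  also have "\<dots> = tw (\<lambda>i. k' i + 2 * k0 i)" by (rule tw_mult)
  finally show ?thesis using e1 by simp
qed

lemma ar2: assumes "((a::nat) + t) mod 3 = 0" shows "(t * 2) mod 3 = a mod 3"
proof -
  have "(t * 2 + (a + t)) mod 3 = (t * 2 + (a + t) mod 3) mod 3" by (rule mod_add_right_eq[symmetric])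
  then have "(t * 2 + (a + t)) mod 3 = (t * 2) mod 3" using assms by simp
  moreover have "t * 2 + (a + t) = a + t * 3" by simp
  ultimately show ?thesis by simp
qed

lemma ar8: "((a1::nat)+a2+a3+a4+a5+a6+a7+a8) mod 3 = 0 \<Longrightarrow> (a2*2+(a3*2+(a4*2+(a5*2+(a6*2+(a7*2+a8*2)))))) mod 3 = a1 mod 3"
proof -
  assume h: "(a1+a2+a3+a4+a5+a6+a7+a8) mod 3 = 0"
  have "(a1 + (a2+a3+a4+a5+a6+a7+a8)) mod 3 = 0" using h by (simp add: add.assoc)
  then have "((a2+a3+a4+a5+a6+a7+a8) * 2) mod 3 = a1 mod 3" by (rule ar2)
  moreover have "(a2+a3+a4+a5+a6+a7+a8) * 2 = a2*2+(a3*2+(a4*2+(a5*2+(a6*2+(a7*2+a8*2)))))" by simp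
  ultimately show ?thesis by (simp only:)
qed

lemma twN:
  assumes nN: "N \<lhd> G2" and A: "carrier (alt_group 8) \<subseteq> phi ` N"
  and k: "(\<Sum>i\<in>{1..8}. k i) mod 3 = 0"
  shows "tw k \<in> N"
proof -
  interpret N: normal N G2 by (rule nN)
  have add: "tw (\<lambda>i. a i + b i) \<in> N" if "tw a \<in> N" "tw b \<in> N" for a b
    using subgroup.m_closed[OF N.is_subgroup that] by (simp add: G2_mult tw_mult)
  have zero: "tw (\<lambda>i. 0) \<in> N" using subgroup.one_closed[OF N.is_subgroup] by (simp add: G2_one tw_zero)
  have scal: "tw (\<lambda>i. c * v i) \<in> N" if "tw v \<in> N" for v c
  proof (induct c)
    case 0 then show ?case using zero by simp
  next
    case (Suc c) then show ?case using add[OF that Suc] by (simp add: algebra_simps)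
  qed
  have cyc: "tw v \<in> N" if "cycle cs" "length cs = 3" "set cs \<subseteq> {1..8}"
     "\<forall>i\<in>{1..8}. k' (cycle_of_list cs i) mod 3 = k0 i mod 3"
     "\<forall>i\<in>{1..8}. (k' i + 2 * k0 i) mod 3 = v i mod 3" for cs k' v
  proof -
    have "cycle_of_list cs \<in> three_cycles 8" using that(1-3) by blast
    then have "cycle_of_list cs \<in> phi ` N" using three_cycles_incl A by blast
    then obtain n where n: "n \<in> N" "phi n = cycle_of_list cs" by auto
    have "tw (\<lambda>i. k' i + 2 * k0 i) \<in> N" using conj_elem[OF nN n(1)] n(2) that(4) by simp
    moreover have "tw (\<lambda>i. k' i + 2 * k0 i) = tw v" by (rule tw_cong[OF that(5)])
    ultimately show ?thesis by simp
  qed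
  define dv where "dv j = (\<lambda>i::nat. if i = j then 1 else if i = 1 then 2 else (0::nat))" for j
  have d3: "tw (dv 3) \<in> N"
    by (rule cyc[of "[1,3,4]" "\<lambda>i. if i = 3 then 1 else if i = 2 then 2 else 0"]) (unfold I8, simp_all add: k0_def dv_def transpose_def)
  have d4: "tw (dv 4) \<in> N"
    by (rule cyc[of "[1,4,3]" "\<lambda>i. if i = 4 then 1 else if i = 2 then 2 else 0"]) (unfold I8, simp_all add: k0_def dv_def transpose_def)
  have d5: "tw (dv 5) \<in> N"
    by (rule cyc[of "[1,5,3]" "\<lambda>i. if i = 5 then 1 else if i = 2 then 2 else 0"]) (unfold I8, simp_all add: k0_def dv_def transpose_def)
  have d6: "tw (dv 6) \<in> N"
    by (rule cyc[of "[1,6,3]" "\<lambda>i. if i = 6 then 1 else if i = 2 then 2 else 0"]) (unfold I8, simp_all add: k0_def dv_def transpose_def)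
  have d7: "tw (dv 7) \<in> N"
    by (rule cyc[of "[1,7,3]" "\<lambda>i. if i = 7 then 1 else if i = 2 then 2 else 0"]) (unfold I8, simp_all add: k0_def dv_def transpose_def)
  have d8: "tw (dv 8) \<in> N"
    by (rule cyc[of "[1,8,3]" "\<lambda>i. if i = 8 then 1 else if i = 2 then 2 else 0"]) (unfold I8, simp_all add: k0_def dv_def transpose_def)
  have d23: "tw (\<lambda>i. if i = 2 then 1 else if i = 3 then 2 else 0) \<in> N"
    by (rule cyc[of "[2,3,4]" "\<lambda>i. if i = 1 then 1 else if i = 3 then 2 else 0"]) (unfold I8, simp_all add: k0_def transpose_def)
  have d2: "tw (dv 2) \<in> N"
  proof -
    have "tw (\<lambda>i. (if i = 2 then 1 else if i = 3 then 2 else 0) + dv 3 i) \<in> N" by (rule add[OF d23 d3])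
    moreover have "tw (\<lambda>i. (if i = 2 then 1 else if i = 3 then 2 else 0) + dv 3 i) = tw (dv 2)"
      by (rule tw_cong) (simp add: I8 dv_def)
    ultimately show ?thesis by simp
  qed
  let ?v = "\<lambda>i. k 2 * dv 2 i + (k 3 * dv 3 i + (k 4 * dv 4 i + (k 5 * dv 5 i + (k 6 * dv 6 i + (k 7 * dv 7 i + k 8 * dv 8 i)))))"
  have "tw ?v \<in> N"
    by (intro add scal d2 d3 d4 d5 d6 d7 d8)
  moreover have "tw ?v = tw k"
  proof (rule tw_cong)
    have s: "(k 1 + k 2 + k 3 + k 4 + k 5 + k 6 + k 7 + k 8) mod 3 = 0" using k unfolding I8 by (simp add: add.assoc)
    show "\<forall>i\<in>{1..8}. ?v i mod 3 = k i mod 3"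
      using ar8[OF s] unfolding I8 by (simp add: dv_def add.assoc)
  qed
  ultimately show ?thesis by simp
qed

theorem proposition2p9:
  fixes N :: "(sticker \<Rightarrow> sticker) set"
  assumes "N \<lhd> G2"
    and "N \<noteq> {\<one>\<^bsub>G2\<^esub>}"
    and "(sym_group 8)\<lparr>carrier := phi ` N\<rparr> \<cong> alt_group 8"
  shows "N = L_set"
proof -
  interpret N: normal N G2 by (rule assms(1))
  interpret S: group SymSt by (rule group_Sym)
  have Nsub: "subgroup N G2" by (rule N.is_subgroup)
  have NG: "N \<subseteq> G2_set" using subgroup.subset[OF Nsub] G2_carrier by simp
  have Nr: "rigid n" if "n \<in> N" for n using NG G2_rigid that by blast
  have Nc: "n \<in> carrier SymSt" if "n \<in> N" for n using NG G2_Bij that by blast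
  let ?H = "phi ` N"
  have Hsub: "subgroup ?H (sym_group 8)"
  proof (rule subgroup.intro)
    show "?H \<subseteq> carrier (sym_group 8)" using phi_perm Nr by (auto simp: sym_group_carrier)
  next
    fix x y assume "x \<in> ?H" "y \<in> ?H"
    then obtain a b where ab: "a \<in> N" "b \<in> N" "x = phi a" "y = phi b" by blast
    have "a \<otimes>\<^bsub>SymSt\<^esub> b \<in> N" using subgroup.m_closed[OF Nsub ab(1,2)] G2_mult by simp
    moreover have "x \<otimes>\<^bsub>sym_group 8\<^esub> y = phi (a \<otimes>\<^bsub>SymSt\<^esub> b)"
      using phi_mult[OF Nr[OF ab(1)] Nr[OF ab(2)]] ab(3,4) by (simp add: sym_group_mult)
    ultimately show "x \<otimes>\<^bsub>sym_group 8\<^esub> y \<in> ?H" by simp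
  next
    have "\<one>\<^bsub>SymSt\<^esub> \<in> N" using subgroup.one_closed[OF Nsub] G2_one by simp
    then show "\<one>\<^bsub>sym_group 8\<^esub> \<in> ?H" using phi_one by (force simp: sym_group_one)
  next
    fix x assume "x \<in> ?H"
    then obtain a where a: "a \<in> N" "x = phi a" by blast
    have ra: "rigid a" using Nr[OF a(1)] .
    have ia0: "inv\<^bsub>G2\<^esub> a \<in> N" using subgroup.m_inv_closed[OF Nsub a(1)] .
    have "inv\<^bsub>G2\<^esub> a = inv\<^bsub>SymSt\<^esub> a" using G2_inv NG a(1) by blast
    then have ia: "inv\<^bsub>SymSt\<^esub> a \<in> N" using ia0 by simp
    have "inv\<^bsub>sym_group 8\<^esub> (phi a) = phi (inv\<^bsub>SymSt\<^esub> a)"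
    proof (rule group.inv_equality[OF sym_group_is_group])
      show "phi (inv\<^bsub>SymSt\<^esub> a) \<otimes>\<^bsub>sym_group 8\<^esub> phi a = \<one>\<^bsub>sym_group 8\<^esub>"
        using phi_mult[OF rigid_inv[OF ra] ra] S.l_inv[OF Nc[OF a(1)]] phi_one
        by (simp add: sym_group_mult sym_group_one)
      show "phi a \<in> carrier (sym_group 8)" using phi_perm[OF ra] by (simp add: sym_group_carrier)
      show "phi (inv\<^bsub>SymSt\<^esub> a) \<in> carrier (sym_group 8)"
        using phi_perm[OF rigid_inv[OF ra]] by (simp add: sym_group_carrier)
    qed
    then show "inv\<^bsub>sym_group 8\<^esub> x \<in> ?H" using ia a(2) by simp
  qed
  have cardH: "2 * card ?H = fact 8"
    using iso_same_card[OF assms(3)] alt_group_card_carrier[of 8] by simp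
  have A8H: "carrier (alt_group 8) \<subseteq> ?H" by (rule A8_sub[OF Hsub cardH])
  have finC: "finite (carrier (sym_group 8))" unfolding sym_group_def by (simp add: finite_permutations)
  have finH: "finite ?H" using finite_subset[OF subgroup.subset[OF Hsub] finC] .
  have "card (carrier (alt_group 8)) = card ?H" using cardH alt_group_card_carrier[of 8] by simp
  then have HA8: "?H = carrier (alt_group 8)" using card_subset_eq[OF finH A8H] by simp
  show ?thesis
  proof
    show "N \<subseteq> L_set"
    proof
      fix n assume n: "n \<in> N"
      obtain w where w: "set w \<subseteq> gens" "word_eval w = n" using G2_word NG n by blast
      have "evenperm (phi n)" using HA8 n alt_group_carrier by blast
      then have "even (length w)" using word_parity[OF w(1)] w(2) by simp
      then show "n \<in> L_set" unfolding L_set_def using w by blast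
    qed
  next
    show "L_set \<subseteq> N"
    proof
      fix g assume "g \<in> L_set"
      then obtain w where w: "g = word_eval w" "set w \<subseteq> gens" "even (length w)"
        unfolding L_set_def by blast
      have gG: "g \<in> G2_set" using word_G2[OF w(2)] w(1) by simp
      have rg: "rigid g" using G2_rigid[OF gG] .
      have gc: "g \<in> carrier SymSt" using G2_Bij[OF gG] .
      have "phi g \<in> carrier (alt_group 8)" unfolding alt_group_carrier
        using phi_perm[OF rg] word_parity[OF w(2)] w(1,3) by simp
      then obtain n where n: "n \<in> N" "phi n = phi g" using A8H by auto
      have rn: "rigid n" using Nr[OF n(1)] .
      have nc: "n \<in> carrier SymSt" using Nc[OF n(1)] .
      have nG: "n \<in> G2_set" using NG n(1) by blast
      define x where "x = inv\<^bsub>SymSt\<^esub> n \<otimes>\<^bsub>SymSt\<^esub> g"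
      have xG: "x \<in> G2_set" unfolding x_def
        using subgroup.m_closed[OF G2_sub subgroup.m_inv_closed[OF G2_sub nG] gG] .
      have rx: "rigid x" using G2_rigid[OF xG] .
      have "phi x = phi (inv\<^bsub>SymSt\<^esub> n) \<circ> phi n" unfolding x_def
        using phi_mult[OF rigid_inv[OF rn] rg] n(2) by simp
      also have "\<dots> = id" using phi_mult[OF rigid_inv[OF rn] rn] S.l_inv[OF nc] phi_one by simp
      finally have px: "phi x = id" .
      define kx where "kx = (\<lambda>i. wt (x (vst (cp i))))"
      have xt: "x = tw kx" unfolding kx_def by (rule pure_tw[OF rx px])
      have "Om x mod 3 = 0" using Om_G2[OF xG] by simp
      then have "(\<Sum>i\<in>{1..8}. kx i) mod 3 = 0" using Om_tw[of kx] xt by simp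
      then have "tw kx \<in> N" by (rule twN[OF assms(1) A8H])
      then have xN: "x \<in> N" using xt by simp
      have "n \<otimes>\<^bsub>SymSt\<^esub> x = g" unfolding x_def
        using nc gc by (simp add: S.m_assoc[symmetric] S.r_inv)
      then show "g \<in> N" using subgroup.m_closed[OF Nsub n(1) xN] G2_mult by simp
    qed
  qed
qed

end
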